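(* Let $m\ge 1$ and let $\Delta_{m-1}=\{\alpha\in\mathbb{R}^m:\alpha_i\ge 0,\ \sum_{i=1}^m\alpha_i=1\}$. For each $i\in\{1,\dots,m\}$ let $g_i(x,y)\in\mathbb{R}^d$ (defined for all inputs $x$ and targets $y$) be the input gradient of the loss of the model using only tool $i$, and for $\alpha\in\Delta_{m-1}$ let $g_\alpha(x,y)=\nabla_x\mathcal{J}_\alpha(x,y)$ be the input gradient of the soft-composed loss $\mathcal{J}_\alpha$. Define the gradient alignment coefficient $$\rho_g=\max\Big\{0,\ \sup_{i\neq j}\ \sup_{(x,y)}\ \cos\big(g_i(x,y),g_j(x,y)\big)\Big\}\in[0,1].$$ Assume (bounded gradients) there is $G\ge 0$ with $\|g_i(x,y)\|_2\le G$ for all $i$ and all $(x,y)$, and (linear aggregation with bounded residual) for every $\alpha\in\Delta_{m-1}$ and all $(x,y)$, $$g_\alpha(x,y)=\sum_{i=1}^m\alpha_i g_i(x,y)+\xi_\alpha(x,y)\quad\text{with}\quad\|\xi_\alpha(x,y)\|_2\le\delta_g .$$ Then for every $\alpha\in\Delta_{m-1}$ and all $(x,y)$, $$\|g_\alpha(x,y)\|_2\le G\sqrt{\rho_g+(1-\rho_g)\|\alpha\|_2^2}+\delta_g .$$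
   Context: Setting: a base LLM with parameters $\theta$ and $m$ tools, tool $i$ being represented by a parameter increment $\Delta\theta_i$. For aggregation weights $\alpha$ in the probability simplex, $\mathcal{J}_\alpha(x,y)$ is the loss of the model with parameters $\theta+\sum_i\alpha_i\Delta\theta_i$ on input context $x$ (viewed as a vector in $\mathbb{R}^d$) and target action $y$; $g_i$ is the input gradient of the loss of the model with parameters $\theta+\Delta\theta_i$. $\cos(u,v)=\langle u,v\rangle/(\|u\|_2\|v\|_2)$. *)

theory Defs
  imports "HOL-Analysis.Analysis"
begin

definition prob_simplex :: "('m::finite \<Rightarrow> real) set" where
  "prob_simplex = {\<alpha>. (\<forall>i. 0 \<le> \<alpha> i) \<and> (\<Sum>i\<in>UNIV. \<alpha> i) = 1}"

definition cosine :: "'a::real_inner \<Rightarrow> 'a \<Rightarrow> real" where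
  "cosine u v = inner u v / (norm u * norm v)"

text \<open>Gradient alignment coefficient
  rho_g = max {0, sup_{i \<noteq> j} sup_{(x,y)} cos(g_i(x,y), g_j(x,y))},
  with the convention sup of the empty set (m = 1) contributing nothing, i.e. rho_g = 0.\<close>
definition grad_align :: "('m \<Rightarrow> 'x \<Rightarrow> 'y \<Rightarrow> 'v::real_inner) \<Rightarrow> real" where
  "grad_align g =
     (let S = {cosine (g i x y) (g j x y) | i j x y. i \<noteq> j}
      in if S = {} then 0 else max 0 (Sup S))"

text \<open>Vertex e_i of the simplex (aggregation using only tool i).\<close>
definition vertex :: "'m \<Rightarrow> 'm \<Rightarrow> real" where
  "vertex i = (\<lambda>j. if j = i then 1 else 0)"

end

theory Submission
  imports Defs
begin

lemma cosine_le1: "cosine (u::'a::real_inner) v \<le> 1"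
proof (cases "norm u * norm v = 0")
  case True then show ?thesis by (auto simp add: cosine_def)
next
  case False
  then have "norm u * norm v > 0" by (simp add: less_le)
  moreover have "inner u v \<le> norm u * norm v" by (rule norm_cauchy_schwarz)
  ultimately show ?thesis by (simp add: cosine_def divide_le_eq_1)
qed

lemma inner_le_align:
  fixes g :: "'m \<Rightarrow> 'x \<Rightarrow> 'y \<Rightarrow> 'v::real_inner"
  assumes "i \<noteq> j" "\<And>i x y. norm (g i x y) \<le> G"
  shows "inner (g i x y) (g j x y) \<le> grad_align g * G * G"
proof -
  define S where "S = {cosine (g i x y) (g j x y) | i j x y. i \<noteq> j}"
  have mem: "cosine (g i x y) (g j x y) \<in> S" using assms(1) unfolding S_def by blast
  have ne: "S \<noteq> {}" using mem by blast
  have bdd: "bdd_above S" unfolding S_def bdd_above_def using cosine_le1 by blast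
  have rho0: "grad_align g = (if S = {} then 0 else max 0 (Sup S))" unfolding grad_align_def Let_def S_def by (rule refl)
  have rho: "grad_align g = max 0 (Sup S)" using ne rho0 by simp
  have c: "cosine (g i x y) (g j x y) \<le> grad_align g"
    using cSup_upper[OF mem bdd] rho by linarith
  have r0: "0 \<le> grad_align g" using rho by simp
  have nn: "0 \<le> norm (g i x y)" "0 \<le> norm (g j x y)" by auto
  have pG: "norm (g i x y) * norm (g j x y) \<le> G * G"
    using assms(2)[of i x y] assms(2)[of j x y] nn by (meson mult_mono order_trans norm_ge_zero)
  show ?thesis
  proof (cases "norm (g i x y) * norm (g j x y) = 0")
    case True
    then have "g i x y = 0 \<or> g j x y = 0" by simp
    then have "inner (g i x y) (g j x y) = 0" by auto
    moreover have "0 \<le> G" using assms(2)[of i x y] norm_ge_zero order_trans by blast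
    then have "0 \<le> grad_align g * G * G" using r0 by simp
    ultimately show ?thesis by simp
  next
    case False
    have "inner (g i x y) (g j x y) = cosine (g i x y) (g j x y) * (norm (g i x y) * norm (g j x y))"
      using False by (simp add: cosine_def)
    also have "\<dots> \<le> grad_align g * (norm (g i x y) * norm (g j x y))"
      using c nn by (intro mult_right_mono) auto
    also have "\<dots> \<le> grad_align g * (G * G)"
      using pG r0 by (intro mult_left_mono) auto
    finally show ?thesis by simp
  qed
qed

lemma align_le1:
  fixes g :: "'m \<Rightarrow> 'x \<Rightarrow> 'y \<Rightarrow> 'v::real_inner"
  shows "grad_align g \<le> 1"
proof -
  define S where "S = {cosine (g i x y) (g j x y) | i j x y. i \<noteq> j}"
  show ?thesis
  proof (cases "S = {}")
    case True
    have "grad_align g = (if S = {} then 0 else max 0 (Sup S))" unfolding grad_align_def Let_def S_def by (rule refl)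
    then show ?thesis using True by simp
  next
    case False
    have "Sup S \<le> 1" using False by (intro cSup_least) (auto simp: S_def cosine_le1)
    moreover have "grad_align g = (if S = {} then 0 else max 0 (Sup S))" unfolding grad_align_def Let_def S_def by (rule refl)
    ultimately show ?thesis using False by simp
  qed
qed

lemma align_nonneg:
  fixes g :: "'m \<Rightarrow> 'x \<Rightarrow> 'y \<Rightarrow> 'v::real_inner"
  shows "0 \<le> grad_align g"
proof -
  define S where "S = {cosine (g i x y) (g j x y) | i j x y. i \<noteq> j}"
  have "grad_align g = (if S = {} then 0 else max 0 (Sup S))" unfolding grad_align_def Let_def S_def by (rule refl)
  then show ?thesis by (cases "S = {}") auto
qed

lemma helper_alg: "(r::real) * G * G * (1 * 1) + (1 - r) * G * G * q = G * G * (r + (1 - r) * q)"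
  by (simp add: algebra_simps)

theorem theorem3p6:
  fixes J :: "('m::finite \<Rightarrow> real) \<Rightarrow> real ^ 'd \<Rightarrow> 'y \<Rightarrow> real"
    and g :: "'m \<Rightarrow> real ^ 'd \<Rightarrow> 'y \<Rightarrow> real ^ 'd"
    and g_agg :: "('m \<Rightarrow> real) \<Rightarrow> real ^ 'd \<Rightarrow> 'y \<Rightarrow> real ^ 'd"
    and G \<delta>g :: real
  assumes grad_i: "\<And>i x y. ((\<lambda>x'. J (vertex i) x' y) has_derivative (\<lambda>h. g i x y \<bullet> h)) (at x)"
    and grad_agg: "\<And>\<alpha> x y. \<alpha> \<in> prob_simplex \<Longrightarrow>
           ((\<lambda>x'. J \<alpha> x' y) has_derivative (\<lambda>h. g_agg \<alpha> x y \<bullet> h)) (at x)"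
    and G_nonneg: "0 \<le> G"
    and bounded: "\<And>i x y. norm (g i x y) \<le> G"
    and linear_agg: "\<And>\<alpha> x y. \<alpha> \<in> prob_simplex \<Longrightarrow>
           \<exists>\<xi>. g_agg \<alpha> x y = (\<Sum>i\<in>UNIV. \<alpha> i *\<^sub>R g i x y) + \<xi> \<and> norm \<xi> \<le> \<delta>g"
    and alpha: "\<alpha> \<in> prob_simplex"
  shows "norm (g_agg \<alpha> x y)
           \<le> G * sqrt (grad_align g + (1 - grad_align g) * (\<Sum>i\<in>UNIV. (\<alpha> i)\<^sup>2)) + \<delta>g"
proof -
  define \<rho> where "\<rho> = grad_align g"
  define v where "v i = g i x y" for i
  define s where "s = (\<Sum>i\<in>UNIV. \<alpha> i *\<^sub>R v i)"
  have a0: "\<And>i. 0 \<le> \<alpha> i" and a1: "(\<Sum>i\<in>UNIV. \<alpha> i) = 1" using alpha by (auto simp: prob_simplex_def)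
  obtain \<xi> where xi: "g_agg \<alpha> x y = s + \<xi>" "norm \<xi> \<le> \<delta>g"
    using linear_agg[OF alpha, of x y] unfolding s_def v_def by blast
  define c :: "'m \<Rightarrow> 'm \<Rightarrow> real" where "c i j = (if i = j then G * G else \<rho> * G * G)" for i j
  have cij: "inner (v i) (v j) \<le> c i j" for i j
  proof (cases "i = j")
    case True
    have "inner (v i) (v i) = norm (v i) * norm (v i)" by (metis power2_eq_square power2_norm_eq_inner)
    also have "\<dots> \<le> G * G" using bounded[of i x y] unfolding v_def using G_nonneg by (intro mult_mono) auto
    finally show ?thesis using True by (simp add: c_def)
  next
    case False
    then show ?thesis using inner_le_align[OF False bounded] by (simp add: c_def v_def \<rho>_def)
  qed
  have "(norm s)\<^sup>2 = inner s s" by (simp add: power2_norm_eq_inner)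
  also have "\<dots> = (\<Sum>i\<in>UNIV. \<Sum>j\<in>UNIV. \<alpha> i * \<alpha> j * inner (v i) (v j))"
    unfolding s_def apply (simp add: inner_sum_left inner_sum_right sum_distrib_left mult.assoc) apply (subst sum.swap) by (simp add: inner_commute mult.left_commute)
  also have "\<dots> \<le> (\<Sum>i\<in>UNIV. \<Sum>j\<in>UNIV. \<alpha> i * \<alpha> j * c i j)"
    by (intro sum_mono mult_left_mono cij) (auto simp: a0)
  also have "\<dots> = (\<Sum>i\<in>UNIV. \<Sum>j\<in>UNIV. \<rho> * G * G * (\<alpha> i * \<alpha> j) + (if i = j then (1 - \<rho>) * G * G * (\<alpha> i * \<alpha> j) else 0))"
    by (intro sum.cong refl) (auto simp: c_def algebra_simps)
  also have "\<dots> = \<rho> * G * G * ((\<Sum>i\<in>UNIV. \<alpha> i) * (\<Sum>j\<in>UNIV. \<alpha> j)) + (1 - \<rho>) * G * G * (\<Sum>i\<in>UNIV. (\<alpha> i)\<^sup>2)"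
  proof -
    have e1: "(\<Sum>i\<in>UNIV. \<Sum>j\<in>UNIV. \<rho> * G * G * (\<alpha> i * \<alpha> j)) = \<rho> * G * G * ((\<Sum>i\<in>UNIV. \<alpha> i) * (\<Sum>j\<in>UNIV. \<alpha> j))"
      apply (simp add: sum_product sum_distrib_left sum_distrib_right mult.assoc) apply (subst sum.swap) by (simp add: mult.commute)
    have e2: "(\<Sum>i\<in>UNIV. \<Sum>j\<in>UNIV. (if i = j then (1 - \<rho>) * G * G * (\<alpha> i * \<alpha> j) else 0)) = (1 - \<rho>) * G * G * (\<Sum>i\<in>UNIV. (\<alpha> i)\<^sup>2)"
      by (simp add: sum_distrib_left power2_eq_square)
    show ?thesis unfolding sum.distrib e1 e2 ..
  qed
  also have "\<dots> = (G * sqrt (\<rho> + (1 - \<rho>) * (\<Sum>i\<in>UNIV. (\<alpha> i)\<^sup>2)))\<^sup>2"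
  proof -
    have X0: "0 \<le> \<rho> + (1 - \<rho>) * (\<Sum>i\<in>UNIV. (\<alpha> i)\<^sup>2)"
    proof -
      have "0 \<le> \<rho>" unfolding \<rho>_def by (rule align_nonneg)
      moreover have "\<rho> \<le> 1" unfolding \<rho>_def by (rule align_le1)
      moreover have "0 \<le> (\<Sum>i\<in>UNIV. (\<alpha> i)\<^sup>2)" by (intro sum_nonneg) auto
      ultimately have "0 \<le> (1 - \<rho>) * (\<Sum>i\<in>UNIV. (\<alpha> i)\<^sup>2)" by (intro mult_nonneg_nonneg) auto
      with \<open>0 \<le> \<rho>\<close> show ?thesis by linarith
    qed
    have e: "(G * sqrt (\<rho> + (1 - \<rho>) * (\<Sum>i\<in>UNIV. (\<alpha> i)\<^sup>2)))\<^sup>2 = G * G * (\<rho> + (1 - \<rho>) * (\<Sum>i\<in>UNIV. (\<alpha> i)\<^sup>2))"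
      unfolding power_mult_distrib real_sqrt_pow2[OF X0] power2_eq_square[of G] by (rule refl)
    have h: "\<rho> * G * G * (1 * 1) + (1 - \<rho>) * G * G * (\<Sum>i\<in>UNIV. (\<alpha> i)\<^sup>2) = G * G * (\<rho> + (1 - \<rho>) * (\<Sum>i\<in>UNIV. (\<alpha> i)\<^sup>2))"
      by (rule helper_alg)
    show ?thesis unfolding a1 by (rule trans[OF h e[symmetric]])
  qed
  finally have sq: "(norm s)\<^sup>2 \<le> (G * sqrt (\<rho> + (1 - \<rho>) * (\<Sum>i\<in>UNIV. (\<alpha> i)\<^sup>2)))\<^sup>2" .
  have "0 \<le> G * sqrt (\<rho> + (1 - \<rho>) * (\<Sum>i\<in>UNIV. (\<alpha> i)\<^sup>2))"
  proof (rule mult_nonneg_nonneg[OF G_nonneg], rule real_sqrt_ge_zero)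
    have "0 \<le> \<rho>" unfolding \<rho>_def by (rule align_nonneg)
    moreover have "\<rho> \<le> 1" unfolding \<rho>_def by (rule align_le1)
    moreover have "0 \<le> (\<Sum>i\<in>UNIV. (\<alpha> i)\<^sup>2)" by (intro sum_nonneg) auto
    ultimately have "0 \<le> (1 - \<rho>) * (\<Sum>i\<in>UNIV. (\<alpha> i)\<^sup>2)" by (intro mult_nonneg_nonneg) auto
    with \<open>0 \<le> \<rho>\<close> show "0 \<le> \<rho> + (1 - \<rho>) * (\<Sum>i\<in>UNIV. (\<alpha> i)\<^sup>2)" by linarith
  qed
  with sq have "norm s \<le> G * sqrt (\<rho> + (1 - \<rho>) * (\<Sum>i\<in>UNIV. (\<alpha> i)\<^sup>2))"
    by (rule power2_le_imp_le)
  moreover have "norm (g_agg \<alpha> x y) \<le> norm s + norm \<xi>" unfolding xi(1) by (rule norm_triangle_ineq)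
  ultimately show ?thesis using xi(2) unfolding \<rho>_def by linarith
qed

end
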